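(* The principle $( * )$ implies the principle $(\maltese)$ (both defined below).
   Context: $[\theta]^{\le\aleph_0}$: countable subsets of $\theta$; $x\subseteq^*y$ iff $x\setminus y$ finite; $\downarrow\mathcal H=\bigcup_{x\in\mathcal H}\mathcal P(x)$; a set is locally in $\mathcal K$ if all its countable subsets are in $\mathcal K$; $B$ is orthogonal to $\mathcal H$ if $B\cap x$ is finite for every $x\in\mathcal H$; directed means every two elements have an upper bound, $\sigma$-directed means every countable subset has an upper bound. $( * )$: for every ordinal $\theta$ and every $\sigma$-directed subfamily $\mathcal H$ of $([\theta]^{\le\aleph_0},\subseteq^* )$, either there is an uncountable $X\subseteq\theta$ locally in $\downarrow\mathcal H$, or $\theta$ is a union of countably many sets orthogonal to $\mathcal H$. A lower set $\mathcal L$ of a poset is $\lambda$-generated if some $\mathcal G\subseteq\mathcal L$ with $|\mathcal G|\le\lambda$ has every element of $\mathcal L$ below some element of $\mathcal G$. $\mathfrak p$ is the least size of a family $\mathcal A\subseteq[\omega]^{\aleph_0}$ with the finite intersection property (finite nonempty subfamilies have infinite intersection) having no infinite $\subseteq^*$-lower bound; $\mathfrak b$ is the least size of a subset of $\omega^\omega$ unbounded under eventual domination. $(\maltese)$: for every ordinal $\theta$ and every directed subfamily $\mathcal H$ of $([\theta]^{\le\aleph_0},\subseteq^* )$ such that $\downarrow\mathcal H$ is generated (every member is a subset of a member of $\mathcal B$) by some $\mathcal B\subseteq\mathcal H$ with $|\mathcal B|<\mathfrak b$, and such that for every countable $a\subseteq\theta$ the lower set $\downarrow\mathcal H\cap\mathcal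 P(a)$ of $([\theta]^{\le\aleph_0},\subseteq)$ is generated by fewer than $\mathfrak p$ elements, either (1) $\theta$ has a countable decomposition into singletons and sets locally in $\downarrow\mathcal H$, or (2) there is an uncountable subset of $\theta$ orthogonal to $\mathcal H$. *)

theory Defs
  imports Main "HOL-Library.Countable_Set"
begin

definition ctbl_subsets :: "'a set \<Rightarrow> 'a set set" where
  "ctbl_subsets \<theta> = {x. x \<subseteq> \<theta> \<and> countable x}"

definition almost_subset :: "'a set \<Rightarrow> 'a set \<Rightarrow> bool" where
  "almost_subset x y \<longleftrightarrow> finite (x - y)"

definition down :: "'a set set \<Rightarrow> 'a set set" where
  "down H = (\<Union>x\<in>H. Pow x)"

definition locally_in :: "'a set \<Rightarrow> 'a set set \<Rightarrow> bool" where
  "locally_in X K \<longleftrightarrow> (\<forall>y. y \<subseteq> X \<and> countable y \<longrightarrow> y \<in> K)"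

definition orthogonal :: "'a set \<Rightarrow> 'a set set \<Rightarrow> bool" where
  "orthogonal B H \<longleftrightarrow> (\<forall>x\<in>H. finite (B \<inter> x))"

definition directed_ae :: "'a set set \<Rightarrow> bool" where
  "directed_ae H \<longleftrightarrow> (\<forall>x\<in>H. \<forall>y\<in>H. \<exists>z\<in>H. almost_subset x z \<and> almost_subset y z)"

definition sigma_directed_ae :: "'a set set \<Rightarrow> bool" where
  "sigma_directed_ae H \<longleftrightarrow>
     (\<forall>C. C \<subseteq> H \<and> countable C \<longrightarrow> (\<exists>z\<in>H. \<forall>x\<in>C. almost_subset x z))"

definition eventually_dominated :: "(nat \<Rightarrow> nat) \<Rightarrow> (nat \<Rightarrow> nat) \<Rightarrow> bool" where
  "eventually_dominated f g \<longleftrightarrow> (\<exists>N. \<forall>n\<ge>N. f n \<le> g n)"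

definition unbounded_family :: "(nat \<Rightarrow> nat) set \<Rightarrow> bool" where
  "unbounded_family F \<longleftrightarrow> \<not> (\<exists>g. \<forall>f\<in>F. eventually_dominated f g)"

text \<open>\<open>|S| < \<bb>\<close>: |S| is below the size of every unbounded family,
  i.e. below the least such size.\<close>
definition less_than_b :: "'b set \<Rightarrow> bool" where
  "less_than_b S \<longleftrightarrow> (\<forall>F. unbounded_family F \<longrightarrow> ordLess2 (card_of S) (card_of F))"

text \<open>Families witnessing \<open>\<pp>\<close>: infinite subsets of \<omega> with the (strong) finite
  intersection property and no infinite almost-lower bound.\<close>
definition p_family :: "nat set set \<Rightarrow> bool" where
  "p_family A \<longleftrightarrow>
     (\<forall>a\<in>A. infinite a) \<and>
     (\<forall>F. F \<subseteq> A \<and> finite F \<and> F \<noteq> {} \<longrightarrow> infinite (\<Inter>F)) \<and>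
     \<not> (\<exists>y. infinite y \<and> (\<forall>a\<in>A. almost_subset y a))"

definition less_than_p :: "'b set \<Rightarrow> bool" where
  "less_than_p S \<longleftrightarrow> (\<forall>A. p_family A \<longrightarrow> ordLess2 (card_of S) (card_of A))"

definition principle_star :: "'a itself \<Rightarrow> bool" where
  "principle_star _ \<longleftrightarrow>
    (\<forall>(\<theta>::'a set) H. H \<subseteq> ctbl_subsets \<theta> \<and> sigma_directed_ae H \<longrightarrow>
       (\<exists>X. X \<subseteq> \<theta> \<and> uncountable X \<and> locally_in X (down H)) \<or>
       (\<exists>D. countable D \<and> \<Union>D = \<theta> \<and> (\<forall>d\<in>D. orthogonal d H)))"

definition principle_maltese :: "'a itself \<Rightarrow> bool" where
  "principle_maltese _ \<longleftrightarrow>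
    (\<forall>(\<theta>::'a set) H.
       H \<subseteq> ctbl_subsets \<theta> \<and> directed_ae H \<and>
       (\<exists>B. B \<subseteq> H \<and> less_than_b B \<and> (\<forall>x\<in>down H. \<exists>b\<in>B. x \<subseteq> b)) \<and>
       (\<forall>a. a \<subseteq> \<theta> \<and> countable a \<longrightarrow>
          (\<exists>G. G \<subseteq> down H \<inter> Pow a \<and> less_than_p G \<and>
               (\<forall>x\<in>down H \<inter> Pow a. \<exists>g\<in>G. x \<subseteq> g)))
     \<longrightarrow>
       (\<exists>D. countable D \<and> \<Union>D = \<theta> \<and>
            (\<forall>d\<in>D. (\<exists>t. d = {t}) \<or> locally_in d (down H))) \<or>
       (\<exists>X. X \<subseteq> \<theta> \<and> uncountable X \<and> orthogonal X H))"

end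

theory Submission
  imports Defs
begin
unbundle cardinal_syntax

lemma as_trans: "almost_subset x y \<Longrightarrow> almost_subset y z \<Longrightarrow> almost_subset x z"
  unfolding almost_subset_def by (rule finite_subset[of _ "(x - y) \<union> (y - z)"]) auto

lemma directed_finite:
  assumes "directed_ae H" "H \<noteq> {}" "finite S" "S \<subseteq> H"
  shows "\<exists>z\<in>H. \<forall>x\<in>S. almost_subset x z"
  using assms(3,4)
proof (induction S rule: finite_induct)
  case empty then show ?case using assms(2) by auto
next
  case (insert a S)
  then obtain z where z: "z \<in> H" "\<forall>x\<in>S. almost_subset x z" by auto
  from assms(1) insert.prems z(1) obtain w where w: "w \<in> H" "almost_subset a w" "almost_subset z w"
    unfolding directed_ae_def by blast
  then show ?case using z as_trans by blast
qed

lemma sigma_dir_I: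
  assumes "B \<subseteq> H" "less_than_b B" "\<forall>x\<in>down H. \<exists>b\<in>B. x \<subseteq> b"
  shows "sigma_directed_ae {y. y \<subseteq> \<theta> \<and> countable y \<and> orthogonal y H}"
  unfolding sigma_directed_ae_def
proof (intro allI impI)
  fix C assume C: "C \<subseteq> {y. y \<subseteq> \<theta> \<and> countable y \<and> orthogonal y H} \<and> countable C"
  show "\<exists>z\<in>{y. y \<subseteq> \<theta> \<and> countable y \<and> orthogonal y H}. \<forall>x\<in>C. almost_subset x z"
  proof (cases "C = {}")
    case True then show ?thesis by (auto simp: orthogonal_def)
  next
    case False
    define Y where "Y = from_nat_into C"
    have rY: "range Y = C" using False C Y_def by auto
    define a where "a = \<Union>C"
    have ca: "countable a" using C unfolding a_def by (intro countable_UN[of C id, simplified]) auto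
    define e where "e = to_nat_on a"
    have inje: "inj_on e a" using ca e_def by auto
    have Ya: "Y n \<subseteq> a" for n using rY a_def by auto
    have Yo: "finite (Y n \<inter> x)" if "x \<in> H" for n x
      using rY C that unfolding orthogonal_def by blast
    define f where "f b n = Max (insert 0 (e ` (Y n \<inter> b)))" for b n
    have fle: "e t \<le> f b n" if "b \<in> B" "t \<in> Y n \<inter> b" for b n t
      unfolding f_def using Yo[of b n] that assms(1) by (intro Max_ge) auto
    have "\<not> unbounded_family (f ` B)"
    proof
      assume u: "unbounded_family (f ` B)"
      then have "card_of B <o card_of (f ` B)" using assms(2) unfolding less_than_b_def by blast
      moreover have "card_of (f ` B) \<le>o card_of B" by (rule card_of_image)
      ultimately show False using not_ordLess_ordLeq by blast
    qed
    then obtain g where g: "\<forall>b\<in>B. eventually_dominated (f b) g"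
      unfolding unbounded_family_def by auto
    define z where "z = {t. \<exists>n. t \<in> Y n \<and> g n < e t}"
    have fin: "finite {t\<in>a. e t \<le> k}" for k
    proof -
      have "e ` {t\<in>a. e t \<le> k} \<subseteq> {..k}" by auto
      then have "finite (e ` {t\<in>a. e t \<le> k})" using finite_subset by blast
      then show ?thesis using inj_on_subset[OF inje] finite_image_iff by (metis (no_types, lifting) mem_Collect_eq subsetI)
    qed
    have zI: "z \<in> {y. y \<subseteq> \<theta> \<and> countable y \<and> orthogonal y H}"
    proof -
      have za: "z \<subseteq> a" using Ya unfolding z_def by auto
      have "a \<subseteq> \<theta>" using C a_def by auto
      moreover have "orthogonal z H" unfolding orthogonal_def
      proof
        fix x assume x: "x \<in> H"
        then have "x \<in> down H" unfolding down_def by auto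
        then obtain b where b: "b \<in> B" "x \<subseteq> b" using assms(3) by auto
        then obtain N where N: "\<forall>n\<ge>N. f b n \<le> g n" using g unfolding eventually_dominated_def by auto
        have "z \<inter> b \<subseteq> (\<Union>n<N. Y n \<inter> b)"
        proof
          fix t assume t: "t \<in> z \<inter> b"
          then obtain n where n: "t \<in> Y n" "g n < e t" unfolding z_def by auto
          have "n < N"
          proof (rule ccontr)
            assume "\<not> n < N"
            then have "f b n \<le> g n" using N by auto
            moreover have "e t \<le> f b n" using fle[of b t n] b t n by auto
            ultimately show False using n by auto
          qed
          then show "t \<in> (\<Union>n<N. Y n \<inter> b)" using n t by auto
        qed
        moreover have "finite (\<Union>n<N. Y n \<inter> b)" using Yo b assms(1) by (intro finite_UN_I) auto
        ultimately show "finite (z \<inter> x)" using b(2) by (meson finite_subset inf_mono order_refl)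
      qed
      ultimately show ?thesis using za ca countable_subset by auto
    qed
    have "\<forall>x\<in>C. almost_subset x z"
    proof
      fix x assume "x \<in> C"
      then obtain n where n: "x = Y n" using rY by auto
      have "Y n - z \<subseteq> {t\<in>a. e t \<le> g n}" using Ya unfolding z_def by auto
      then show "almost_subset x z" unfolding almost_subset_def n using fin finite_subset by blast
    qed
    then show ?thesis using zI by blast
  qed
qed


lemma p_lemma:
  assumes Hne: "H \<noteq> {}" and dir: "directed_ae H"
    and gen: "G \<subseteq> down H \<inter> Pow c" "less_than_p G" "\<forall>x\<in>down H \<inter> Pow c. \<exists>g\<in>G. x \<subseteq> g"
    and dI: "\<forall>y\<in>{y. y \<subseteq> \<theta> \<and> countable y \<and> orthogonal y H}. finite (d \<inter> y)"
    and dth: "d \<subseteq> \<theta>" and cd: "c \<subseteq> d" and cc: "countable c"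
  shows "\<exists>x\<in>H. finite (c - x)"
proof (rule ccontr)
  assume neg: "\<not> (\<exists>x\<in>H. finite (c - x))"
  then have cinf: "infinite c" using Hne by auto
  define e where "e = to_nat_on c"
  have bij: "bij_betw e c UNIV" using to_nat_on_infinite[OF cc cinf] e_def by simp
  then have inje: "inj_on e c" and ec: "e ` c = UNIV" by (auto simp: bij_betw_def)
  define A where "A = (\<lambda>g. e ` (c - g)) ` G"
  have gx: "\<exists>x\<in>H. g \<subseteq> x" if "g \<in> G" for g using gen(1) that unfolding down_def by blast
  have pA: "p_family A" unfolding p_family_def
  proof (intro conjI)
    show "\<forall>a\<in>A. infinite a"
    proof
      fix a assume "a \<in> A"
      then obtain g where g: "g \<in> G" "a = e ` (c - g)" unfolding A_def by auto
      then obtain x where x: "x \<in> H" "g \<subseteq> x" using gx by auto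
      have "infinite (c - g)" using neg x finite_subset[of "c - x" "c - g"] by auto
      then show "infinite a" using g inj_on_subset[OF inje] finite_image_iff[of e "c - g"] by auto
    qed
    show "\<forall>F. F \<subseteq> A \<and> finite F \<and> F \<noteq> {} \<longrightarrow> infinite (\<Inter>F)"
    proof (intro allI impI)
      fix F assume F: "F \<subseteq> A \<and> finite F \<and> F \<noteq> {}"
      have "finite F" "F \<subseteq> (\<lambda>g. e ` (c - g)) ` G" using F unfolding A_def by auto
      from finite_subset_image[OF this] obtain G' where G': "G' \<subseteq> G" "finite G'" "F = (\<lambda>g. e ` (c - g)) ` G'"
        by blast
      have "\<forall>g\<in>G'. \<exists>x. x \<in> H \<and> g \<subseteq> x" using gx G'(1) by blast
      from bchoice[OF this] obtain xg where xg: "\<forall>g\<in>G'. xg g \<in> H \<and> g \<subseteq> xg g" by blast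
      have "finite (xg ` G')" "xg ` G' \<subseteq> H" using xg G'(2) by auto
      from directed_finite[OF dir Hne this] obtain z where z: "z \<in> H" "\<forall>x\<in>xg ` G'. almost_subset x z"
        by blast
      have "finite (xg g - z)" if "g \<in> G'" for g using z(2) that unfolding almost_subset_def by blast
      then have fin: "finite (\<Union>g\<in>G'. xg g - z)" using G'(2) by blast
      have "infinite (c - z)" using neg z(1) by blast
      then have inf1: "infinite ((c - z) - (\<Union>g\<in>G'. xg g - z))" using Diff_infinite_finite[OF fin] by blast
      have sub1: "(c - z) - (\<Union>g\<in>G'. xg g - z) \<subseteq> c - \<Union>G'" using xg by blast
      have inf3: "infinite (c - \<Union>G')" using finite_subset[OF sub1] inf1 by blast
      have "inj_on e (c - \<Union>G')" using inje by (rule inj_on_subset) blast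
      then have inf2: "infinite (e ` (c - \<Union>G'))" using inf3 finite_image_iff by blast
      have "e ` (c - \<Union>G') \<subseteq> \<Inter>F" using G'(3) by blast
      then show "infinite (\<Inter>F)" using inf2 finite_subset by blast
    qed
    show "\<not> (\<exists>y. infinite y \<and> (\<forall>a\<in>A. almost_subset y a))"
    proof
      assume "\<exists>y. infinite y \<and> (\<forall>a\<in>A. almost_subset y a)"
      then obtain y where y: "infinite y" "\<forall>a\<in>A. almost_subset y a" by auto
      define c' where "c' = {t\<in>c. e t \<in> y}"
      have "y \<subseteq> e ` c'" using ec unfolding c'_def by auto
      then have c'inf: "infinite c'" using y(1) finite_subset by auto
      have "orthogonal c' H" unfolding orthogonal_def
      proof
        fix x assume x: "x \<in> H"
        have "c \<inter> x \<in> down H \<inter> Pow c" using x unfolding down_def by auto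
        then obtain g where g: "g \<in> G" "c \<inter> x \<subseteq> g" using gen(3) by auto
        have "e ` (c' \<inter> x) \<subseteq> y - e ` (c - g)"
        proof
          fix n assume "n \<in> e ` (c' \<inter> x)"
          then obtain t where t: "t \<in> c'" "t \<in> x" "n = e t" by auto
          have "t \<in> c" "t \<in> g" using t g c'_def by auto
          then have "e t \<notin> e ` (c - g)" using inje by (auto simp: inj_on_def)
          then show "n \<in> y - e ` (c - g)" using t c'_def by auto
        qed
        moreover have "finite (y - e ` (c - g))" using y(2) g unfolding A_def almost_subset_def by auto
        ultimately have "finite (e ` (c' \<inter> x))" using finite_subset by auto
        moreover have "inj_on e (c' \<inter> x)" using inje by (rule inj_on_subset) (auto simp: c'_def)
        ultimately show "finite (c' \<inter> x)" using finite_image_iff by auto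
      qed
      moreover have "c' \<subseteq> \<theta>" "countable c'" using cd dth cc countable_subset[of c' c] c'_def by auto
      ultimately have "finite (d \<inter> c')" using dI by auto
      moreover have "d \<inter> c' = c'" using cd c'_def by auto
      ultimately show False using c'inf by auto
    qed
  qed
  have "card_of G <o card_of A" using gen(2) pA unfolding less_than_p_def by blast
  moreover have "card_of A \<le>o card_of G" unfolding A_def by (rule card_of_image)
  ultimately show False using not_ordLess_ordLeq by blast
qed

lemma seq_lemma:
  assumes "\<forall>U. U \<subseteq> d \<and> countable U \<longrightarrow> (\<exists>x\<in>H. finite (U - x))"
  shows "\<exists>R. R \<subseteq> d \<and> countable R \<and> locally_in (d - R) (down H)"
proof (rule ccontr)
  assume neg: "\<not> ?thesis"
  have ex: "\<exists>c. c \<subseteq> d - R \<and> countable c \<and> c \<notin> down H" if "R \<subseteq> d" "countable R" for R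
  proof -
    have "\<not> locally_in (d - R) (down H)" using neg that by blast
    then show ?thesis unfolding locally_in_def by blast
  qed
  define phi where "phi R = (SOME c. c \<subseteq> d - R \<and> countable c \<and> c \<notin> down H)" for R
  have phiP: "phi R \<subseteq> d - R \<and> countable (phi R) \<and> phi R \<notin> down H" if "R \<subseteq> d" "countable R" for R
    unfolding phi_def by (rule someI_ex[OF ex[OF that]])
  define S where "S = rec_nat {} (\<lambda>n Sn. Sn \<union> phi Sn)"
  have S0: "S 0 = {}" and SS: "S (Suc n) = S n \<union> phi (S n)" for n by (simp_all add: S_def)
  have P: "S n \<subseteq> d \<and> countable (S n)" for n
  proof (induction n)
    case 0
    then show ?case using S0 by simp
  next
    case (Suc n)
    then have "phi (S n) \<subseteq> d - S n" "countable (phi (S n))" using phiP by blast+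
    then have "S n \<union> phi (S n) \<subseteq> d" "countable (S n \<union> phi (S n))" using Suc by auto
    then show ?case unfolding SS[of n] by blast
  qed
  have Q: "phi (S n) \<subseteq> d - S n" "countable (phi (S n))" "phi (S n) \<notin> down H" for n
    using phiP[of "S n"] P[of n] by blast+
  have mono: "S m \<subseteq> S n" if "m \<le> n" for m n
    using that
  proof (induction n)
    case 0 then show ?case by simp
  next
    case (Suc n)
    show ?case
    proof (cases "m = Suc n")
      case True then show ?thesis by simp
    next
      case False then have "m \<le> n" using Suc.prems by simp
      then show ?thesis using Suc.IH SS[of n] by blast
    qed
  qed
  have disj: "phi (S m) \<inter> phi (S n) = {}" if "m < n" for m n
  proof -
    have "phi (S m) \<subseteq> S (Suc m)" using SS[of m] by blast
    also have "\<dots> \<subseteq> S n" using mono[of "Suc m" n] that by simp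
    finally show ?thesis using Q(1)[of n] by blast
  qed
  define U where "U = (\<Union>n. phi (S n))"
  have "U \<subseteq> d" using Q(1) unfolding U_def by blast
  moreover have "countable U" unfolding U_def using Q(2) by (intro countable_UN) auto
  ultimately obtain x where x: "x \<in> H" "finite (U - x)" using assms by blast
  have "\<exists>p. p \<in> phi (S n) - x" for n
  proof (rule ccontr)
    assume "\<nexists>p. p \<in> phi (S n) - x"
    then have "phi (S n) \<subseteq> x" by blast
    then have "phi (S n) \<in> down H" using x(1) unfolding down_def by blast
    then show False using Q(3) by blast
  qed
  then obtain p where p: "\<And>n. p n \<in> phi (S n) - x" by metis
  have "inj p"
  proof (rule injI)
    fix m n assume pmn: "p m = p n"
    show "m = n"
    proof (rule ccontr)
      assume "m \<noteq> n"
      then have "phi (S m) \<inter> phi (S n) = {}" using disj[of m n] disj[of n m] by (cases "m < n") auto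
      moreover have "p m \<in> phi (S m)" "p n \<in> phi (S n)" using p[of m] p[of n] by auto
      ultimately show False using pmn by auto
    qed
  qed
  moreover have "range p \<subseteq> U - x" unfolding U_def using p by fastforce
  ultimately have "infinite (range p)" using finite_imageD[of p UNIV] infinite_UNIV_nat by auto
  moreover have "finite (range p)" using finite_subset[OF \<open>range p \<subseteq> U - x\<close> x(2)] .
  ultimately show False by contradiction
qed

theorem theorem5p1:
  assumes "principle_star TYPE('a)"
  shows "principle_maltese TYPE('a)"
  unfolding principle_maltese_def
proof (intro allI impI)
  fix \<theta> :: "'a set" and H
  assume hyp: "H \<subseteq> ctbl_subsets \<theta> \<and> directed_ae H \<and>
       (\<exists>B. B \<subseteq> H \<and> less_than_b B \<and> (\<forall>x\<in>down H. \<exists>b\<in>B. x \<subseteq> b)) \<and>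
       (\<forall>a. a \<subseteq> \<theta> \<and> countable a \<longrightarrow>
          (\<exists>G. G \<subseteq> down H \<inter> Pow a \<and> less_than_p G \<and>
               (\<forall>x\<in>down H \<inter> Pow a. \<exists>g\<in>G. x \<subseteq> g)))"
  note Hsub = hyp[THEN conjunct1] and dir = hyp[THEN conjunct2, THEN conjunct1]
    and Bex = hyp[THEN conjunct2, THEN conjunct2, THEN conjunct1]
    and loc = hyp[THEN conjunct2, THEN conjunct2, THEN conjunct2]
  from Bex obtain B where B: "B \<subseteq> H" "less_than_b B" "\<forall>x\<in>down H. \<exists>b\<in>B. x \<subseteq> b" by (elim exE conjE)
  show "(\<exists>D. countable D \<and> \<Union>D = \<theta> \<and>
            (\<forall>d\<in>D. (\<exists>t. d = {t}) \<or> locally_in d (down H))) \<or>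
       (\<exists>X. X \<subseteq> \<theta> \<and> uncountable X \<and> orthogonal X H)"
  proof (cases "H = {}")
    case True
    show ?thesis
    proof (cases "countable \<theta>")
      case True
      then have "countable ((\<lambda>t. {t}) ` \<theta>)" by simp
      moreover have "\<Union>((\<lambda>t. {t}) ` \<theta>) = \<theta>" by blast
      ultimately show ?thesis by blast
    next
      case False
      then show ?thesis using \<open>H = {}\<close> unfolding orthogonal_def by blast
    qed
  next
    case Hne: False
    define I where "I = {y. y \<subseteq> \<theta> \<and> countable y \<and> orthogonal y H}"
    have sd: "sigma_directed_ae I" unfolding I_def by (rule sigma_dir_I[OF B])
    have Isub: "I \<subseteq> ctbl_subsets \<theta>" unfolding I_def ctbl_subsets_def by blast
    have alt: "(\<exists>X. X \<subseteq> \<theta> \<and> uncountable X \<and> locally_in X (down I)) \<or>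
       (\<exists>D. countable D \<and> \<Union>D = \<theta> \<and> (\<forall>d\<in>D. orthogonal d I))"
      using assms[unfolded principle_star_def, rule_format, OF conjI[OF Isub sd]] .
    show ?thesis
    proof (cases "\<exists>X. X \<subseteq> \<theta> \<and> uncountable X \<and> locally_in X (down I)")
      case True
      then obtain X where X: "X \<subseteq> \<theta>" "uncountable X" "locally_in X (down I)" by blast
      have "orthogonal X H" unfolding orthogonal_def
      proof
        fix x assume x: "x \<in> H"
        then have "x \<in> ctbl_subsets \<theta>" using Hsub by (rule subsetD[rotated])
        then have "countable x" unfolding ctbl_subsets_def by simp
        then have cX: "countable (X \<inter> x)" by (rule countable_subset[rotated]) (rule Int_lower2)
        have "X \<inter> x \<subseteq> X" by (rule Int_lower1)
        then have "X \<inter> x \<in> down I" using X(3) cX unfolding locally_in_def by simp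
        then obtain y where y: "y \<in> I" "X \<inter> x \<subseteq> y" unfolding down_def by blast
        then have "finite (y \<inter> x)" using x unfolding I_def orthogonal_def by blast
        moreover have "X \<inter> x \<subseteq> y \<inter> x" using y by blast
        ultimately show "finite (X \<inter> x)" by (rule finite_subset[rotated])
      qed
      then show ?thesis using X by blast
    next
      case False
      then obtain D where D: "countable D" "\<Union>D = \<theta>" "\<forall>d\<in>D. orthogonal d I" using alt by blast
      have R: "\<exists>R. R \<subseteq> d \<and> countable R \<and> locally_in (d - R) (down H)" if d: "d \<in> D" for d
      proof (rule seq_lemma, intro allI impI)
        fix U assume U: "U \<subseteq> d \<and> countable U"
        have dth: "d \<subseteq> \<theta>" using D(2) d by blast
        then have "U \<subseteq> \<theta>" using U by blast
        then have "U \<subseteq> \<theta> \<and> countable U" using U by blast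
        from loc[rule_format, OF this] obtain G where G: "G \<subseteq> down H \<inter> Pow U" "less_than_p G" "\<forall>x\<in>down H \<inter> Pow U. \<exists>g\<in>G. x \<subseteq> g"
          by blast
        have "orthogonal d I" using D(3) d by blast
        then have dI0: "\<forall>y\<in>I. finite (d \<inter> y)" unfolding orthogonal_def .
        have dI: "\<forall>y\<in>{y. y \<subseteq> \<theta> \<and> countable y \<and> orthogonal y H}. finite (d \<inter> y)"
          using dI0 unfolding I_def .
        show "\<exists>x\<in>H. finite (U - x)"
          by (rule p_lemma[OF Hne dir G dI dth]) (use U in blast)+
      qed
      then have "\<forall>d\<in>D. \<exists>R. R \<subseteq> d \<and> countable R \<and> locally_in (d - R) (down H)" by blast
      from bchoice[OF this] obtain Rf where Rf0: "\<forall>d\<in>D. Rf d \<subseteq> d \<and> countable (Rf d) \<and> locally_in (d - Rf d) (down H)"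
        by blast
      have Rf: "Rf d \<subseteq> d \<and> countable (Rf d) \<and> locally_in (d - Rf d) (down H)" if "d \<in> D" for d
        using Rf0 that by blast
      define D' where "D' = (\<lambda>d. d - Rf d) ` D \<union> (\<lambda>t. {t}) ` (\<Union>d\<in>D. Rf d)"
      have "countable (\<Union>d\<in>D. Rf d)" using D(1) Rf by (intro countable_UN) auto
      then have "countable D'" unfolding D'_def using D(1) by simp
      moreover have "\<Union>D' = \<theta>"
      proof
        show "\<Union>D' \<subseteq> \<theta>" unfolding D'_def using D(2) Rf by blast
        show "\<theta> \<subseteq> \<Union>D'"
        proof
          fix t assume "t \<in> \<theta>"
          then obtain d where d: "d \<in> D" "t \<in> d" using D(2) by blast
          show "t \<in> \<Union>D'"
          proof (cases "t \<in> Rf d")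
            case True then have "{t} \<in> D'" unfolding D'_def using d by blast
            then show ?thesis by blast
          next
            case False then have "d - Rf d \<in> D'" "t \<in> d - Rf d" unfolding D'_def using d by blast+
            then show ?thesis by blast
          qed
        qed
      qed
      moreover have "\<forall>d\<in>D'. (\<exists>t. d = {t}) \<or> locally_in d (down H)"
      proof
        fix e assume "e \<in> D'"
        then consider (a) d where "d \<in> D" "e = d - Rf d" | (b) t where "e = {t}" unfolding D'_def by blast
        then show "(\<exists>t. e = {t}) \<or> locally_in e (down H)"
        proof cases
          case a then show ?thesis using Rf[of d] by simp
        next
          case b then show ?thesis by blast
        qed
      qed
      ultimately show ?thesis by (intro disjI1 exI[of _ D'] conjI)
    qed
  qed
qed

end
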